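(* Let $d\ge2$, $\kappa,l>0$, $\lambda\in\mathbb R$, $k\in\{-1,0,1\}$ and $\mu\in\mathbb R$. On the open set of $(A,\phi)\in\mathbb R^2$ where the quantities under the square roots below are positive, define $$\pi_\phi(A,\phi)=\pm e^{dA}\sqrt{\frac{d(d-1)}{\kappa^2l^2}\mu e^{-(d+1)A}+k\Big(\frac{d-1}{2l}\Big)^2\phi^2e^{-2A}+\lambda\phi^{\frac{2(d+1)}{d-1}}},$$ $$\pi_A(A,\phi)=-\frac{d(d-1)}{\kappa^2l}e^{dA}\sqrt{1+ke^{-2A}+\mu e^{-(d+1)A}}+\frac{d-1}2\phi\,\pi_\phi(A,\phi).$$ Then (i) $\mathcal H(A,\phi,\pi_A(A,\phi),\pi_\phi(A,\phi))=0$ identically, where $$\mathcal H=\frac12\Big\{e^{-dA}\Big(\pi_\phi^2-\frac{\kappa^2}{d(d-1)}\big(\pi_A-\tfrac{d-1}2\phi\pi_\phi\big)^2\Big)+e^{dA}\Big(\frac{d(d-1)}{\kappa^2l^2}-\lambda\phi^{\frac{2(d+1)}{d-1}}+\frac{d(d-1)k}{\kappa^2l^2}e^{-2A}\big(1-\tfrac{(d-1)\kappa^2}{4d}\phi^2\big)\Big)\Big\};$$ (ii) $\partial\pi_A/\partial\phi=\partial\pi_\phi/\partial A$. Consequently, locally there is a function $\mathcal S(A,\phi)$ (depending on the arbitrary constant $\mu$) with $\pi_A=\partial_A\mathcal S$, $\pi_\phi=\partial_\phi\mathcal S$, which is a complete integral of the Hamilton–Jacobi equation $\mathcal H(A,\phi,\partial_A\mathcal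 S,\partial_\phi\mathcal S)=0$.
   Context: $\mathcal H$ is the radial Hamiltonian of the action $\int d^{d+1}x\sqrt g\big(-\frac{1}{2\kappa^2}(R+\frac{d(d-1)}{l^2})+\frac12(\partial\phi)^2+\frac{d-1}{8d}R\phi^2+\frac\lambda2\phi^{2(d+1)/(d-1)}\big)$ reduced to metrics $ds^2=dr^2+e^{2A(r)}g^{(0)}_{ij}dx^idx^j$ with $g^{(0)}$ of constant scalar curvature $kd(d-1)/l^2$ and $\phi=\phi(r)$; here $\pi_A$, $\pi_\phi$ are the momenta conjugate to $A$ and $\phi$. *)

theory Defs
  imports "HOL-Analysis.Analysis"
begin

text \<open>The power phi^(2(d+1)/(d-1)) for real phi, read as (phi^2)^((d+1)/(d-1)) = |phi|^(2(d+1)/(d-1)).\<close>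
definition phipow :: "nat \<Rightarrow> real \<Rightarrow> real" where
  "phipow d \<phi> = (\<phi>\<^sup>2) powr ((real d + 1) / (real d - 1))"

definition rad_phi :: "nat \<Rightarrow> real \<Rightarrow> real \<Rightarrow> real \<Rightarrow> real \<Rightarrow> real \<Rightarrow> real \<Rightarrow> real \<Rightarrow> real" where
  "rad_phi d \<kappa> l lam k \<mu> A \<phi> =
     real d * (real d - 1) / (\<kappa>\<^sup>2 * l\<^sup>2) * \<mu> * exp (- (real d + 1) * A)
     + k * ((real d - 1) / (2 * l))\<^sup>2 * \<phi>\<^sup>2 * exp (- 2 * A)
     + lam * phipow d \<phi>"

definition rad_A :: "nat \<Rightarrow> real \<Rightarrow> real \<Rightarrow> real \<Rightarrow> real" where
  "rad_A d k \<mu> A = 1 + k * exp (- 2 * A) + \<mu> * exp (- (real d + 1) * A)"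

definition dom_HJ :: "nat \<Rightarrow> real \<Rightarrow> real \<Rightarrow> real \<Rightarrow> real \<Rightarrow> real \<Rightarrow> (real \<times> real) set" where
  "dom_HJ d \<kappa> l lam k \<mu> = {(A, \<phi>). rad_phi d \<kappa> l lam k \<mu> A \<phi> > 0 \<and> rad_A d k \<mu> A > 0}"

text \<open>pi_phi, with sign s = +1 or -1 for the choice of branch.\<close>
definition pi_phi :: "real \<Rightarrow> nat \<Rightarrow> real \<Rightarrow> real \<Rightarrow> real \<Rightarrow> real \<Rightarrow> real \<Rightarrow> real \<Rightarrow> real \<Rightarrow> real" where
  "pi_phi s d \<kappa> l lam k \<mu> A \<phi> = s * exp (real d * A) * sqrt (rad_phi d \<kappa> l lam k \<mu> A \<phi>)"

definition pi_A :: "real \<Rightarrow> nat \<Rightarrow> real \<Rightarrow> real \<Rightarrow> real \<Rightarrow> real \<Rightarrow> real \<Rightarrow> real \<Rightarrow> real \<Rightarrow> real" where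
  "pi_A s d \<kappa> l lam k \<mu> A \<phi> =
     - (real d * (real d - 1) / (\<kappa>\<^sup>2 * l)) * exp (real d * A) * sqrt (rad_A d k \<mu> A)
     + (real d - 1) / 2 * \<phi> * pi_phi s d \<kappa> l lam k \<mu> A \<phi>"

definition Ham :: "nat \<Rightarrow> real \<Rightarrow> real \<Rightarrow> real \<Rightarrow> real \<Rightarrow> real \<Rightarrow> real \<Rightarrow> real \<Rightarrow> real \<Rightarrow> real" where
  "Ham d \<kappa> l lam k A \<phi> pA pP =
     1/2 * ( exp (- real d * A) * (pP\<^sup>2 - \<kappa>\<^sup>2 / (real d * (real d - 1)) * (pA - (real d - 1) / 2 * \<phi> * pP)\<^sup>2)
           + exp (real d * A) * ( real d * (real d - 1) / (\<kappa>\<^sup>2 * l\<^sup>2) - lam * phipow d \<phi>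
               + real d * (real d - 1) * k / (\<kappa>\<^sup>2 * l\<^sup>2) * exp (- 2 * A)
                 * (1 - (real d - 1) * \<kappa>\<^sup>2 / (4 * real d) * \<phi>\<^sup>2)))"

end

theory Submission
  imports Defs
begin


definition pe :: "nat \<Rightarrow> real" where "pe d = (real d + 1) / (real d - 1)"
definition dphipow :: "nat \<Rightarrow> real \<Rightarrow> real" where
  "dphipow d y = 2 * pe d * y * (y\<^sup>2) powr (pe d - 1)"

lemma pe_gt1: "d \<ge> 2 \<Longrightarrow> pe d > 1"
  unfolding pe_def by (simp add: field_simps)

lemma phipow_deriv:
  assumes d: "d \<ge> 2"
  shows "(phipow d has_real_derivative dphipow d y) (at y)"
proof (cases "y = 0")
  case False
  have "((\<lambda>y. (y\<^sup>2) powr pe d) has_real_derivative pe d * (y\<^sup>2) powr (pe d - 1) * (2 * y)) (at y)"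
    using False by (auto intro!: derivative_eq_intros)
  then show ?thesis unfolding phipow_def dphipow_def pe_def[symmetric]
    by (simp add: algebra_simps)
next
  case True
  have p1: "pe d - 1 > 0" using pe_gt1[OF d] by simp
  define g where "g z = z * (z\<^sup>2) powr (pe d - 1)" for z
  have eq: "phipow d z - phipow d y = g z * (z - y)" for z
  proof (cases "z = 0")
    case True then show ?thesis using \<open>y = 0\<close> by (simp add: phipow_def g_def)
  next
    case False
    have "(z\<^sup>2) powr pe d = (z\<^sup>2) powr (1 + (pe d - 1))" by simp
    also have "\<dots> = z\<^sup>2 * (z\<^sup>2) powr (pe d - 1)" using False by (simp only: powr_add, simp)
    finally show ?thesis using \<open>y = 0\<close> unfolding phipow_def g_def pe_def[symmetric]
      by (simp add: power2_eq_square)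
  qed
  have "isCont g 0" unfolding g_def isCont_def
    using p1 by (auto intro!: tendsto_eq_intros)
  moreover have "g 0 = dphipow d y" using True by (simp add: g_def dphipow_def)
  ultimately show ?thesis using True eq unfolding CARAT_DERIV by metis
qed

lemma phipow_id: "d \<ge> 2 \<Longrightarrow> y * dphipow d y = 2 * pe d * phipow d y"
proof (cases "y = 0")
  case False
  assume d: "d \<ge> 2"
  have "(y\<^sup>2) powr pe d = (y\<^sup>2) powr (1 + (pe d - 1))" by simp
  also have "\<dots> = y\<^sup>2 * (y\<^sup>2) powr (pe d - 1)" using False by (simp only: powr_add, simp)
  finally show ?thesis unfolding phipow_def dphipow_def pe_def[symmetric]
    by (simp add: power2_eq_square)
qed (simp add: phipow_def dphipow_def)



definition RA :: "nat \<Rightarrow> real \<Rightarrow> real \<Rightarrow> real \<Rightarrow> real \<Rightarrow> real \<Rightarrow> real \<Rightarrow> real \<Rightarrow> real" where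
  "RA d \<kappa> l lam k \<mu> A \<phi> =
     real d * (real d - 1) / (\<kappa>\<^sup>2 * l\<^sup>2) * \<mu> * (exp (- (real d + 1) * A) * (- (real d + 1)))
     + k * ((real d - 1) / (2 * l))\<^sup>2 * \<phi>\<^sup>2 * (exp (- 2 * A) * (- 2))"

definition RY :: "nat \<Rightarrow> real \<Rightarrow> real \<Rightarrow> real \<Rightarrow> real \<Rightarrow> real \<Rightarrow> real \<Rightarrow> real \<Rightarrow> real" where
  "RY d \<kappa> l lam k \<mu> A \<phi> =
     k * ((real d - 1) / (2 * l))\<^sup>2 * (2 * \<phi>) * exp (- 2 * A) + lam * dphipow d \<phi>"

definition PA where
  "PA s d \<kappa> l lam k \<mu> A \<phi> = s * (exp (real d * A) * real d * sqrt (rad_phi d \<kappa> l lam k \<mu> A \<phi>)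
     + exp (real d * A) * (RA d \<kappa> l lam k \<mu> A \<phi> / (2 * sqrt (rad_phi d \<kappa> l lam k \<mu> A \<phi>))))"

definition PY where
  "PY s d \<kappa> l lam k \<mu> A \<phi> = (real d - 1) / 2 * (pi_phi s d \<kappa> l lam k \<mu> A \<phi>
     + \<phi> * (s * exp (real d * A) * (RY d \<kappa> l lam k \<mu> A \<phi> / (2 * sqrt (rad_phi d \<kappa> l lam k \<mu> A \<phi>)))))"

lemma rad_phi_dA:
  assumes "\<kappa> \<noteq> 0" "l \<noteq> 0"
  shows "((\<lambda>a. rad_phi d \<kappa> l lam k \<mu> a \<phi>) has_real_derivative RA d \<kappa> l lam k \<mu> A \<phi>) (at A)"
  unfolding rad_phi_def RA_def using assms
  by (auto intro!: derivative_eq_intros)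

lemma rad_phi_dphi:
  assumes "d \<ge> 2"
  shows "((\<lambda>p. rad_phi d \<kappa> l lam k \<mu> A p) has_real_derivative RY d \<kappa> l lam k \<mu> A \<phi>) (at \<phi>)"
  unfolding rad_phi_def RY_def
  by (auto intro!: derivative_eq_intros phipow_deriv[OF assms])

lemma pi_phi_dA:
  assumes "\<kappa> \<noteq> 0" "l \<noteq> 0" "rad_phi d \<kappa> l lam k \<mu> A \<phi> > 0"
  shows "((\<lambda>a. pi_phi s d \<kappa> l lam k \<mu> a \<phi>) has_real_derivative PA s d \<kappa> l lam k \<mu> A \<phi>) (at A)"
  unfolding pi_phi_def PA_def
  using assms by (auto intro!: derivative_eq_intros rad_phi_dA) (simp add: field_simps)

lemma pi_phi_dphi:
  assumes "d \<ge> 2" "rad_phi d \<kappa> l lam k \<mu> A \<phi> > 0"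
  shows "((\<lambda>p. pi_phi s d \<kappa> l lam k \<mu> A p) has_real_derivative s * exp (real d * A) * (RY d \<kappa> l lam k \<mu> A \<phi> / (2 * sqrt (rad_phi d \<kappa> l lam k \<mu> A \<phi>)))) (at \<phi>)"
  unfolding pi_phi_def
  using assms by (auto intro!: derivative_eq_intros rad_phi_dphi) (simp add: field_simps)

lemma pi_A_dphi:
  assumes "d \<ge> 2" "rad_phi d \<kappa> l lam k \<mu> A \<phi> > 0"
  shows "((\<lambda>p. pi_A s d \<kappa> l lam k \<mu> A p) has_real_derivative PY s d \<kappa> l lam k \<mu> A \<phi>) (at \<phi>)"
  unfolding pi_A_def PY_def
  using assms by (auto intro!: derivative_eq_intros pi_phi_dphi) (simp add: field_simps)

lemma PA_PY:
  assumes d: "d \<ge> 2" and R: "rad_phi d \<kappa> l lam k \<mu> A \<phi> > 0" and l: "l \<noteq> 0"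
  shows "PA s d \<kappa> l lam k \<mu> A \<phi> = PY s d \<kappa> l lam k \<mu> A \<phi>"
proof -
  define q where "q = sqrt (rad_phi d \<kappa> l lam k \<mu> A \<phi>)"
  have q0: "q > 0" using R by (simp add: q_def)
  have qq: "rad_phi d \<kappa> l lam k \<mu> A \<phi> = q\<^sup>2" using R by (simp add: q_def)
  have dd: "real d - 1 > 0" using d by simp
  have id: "\<phi> * dphipow d \<phi> = 2 * ((real d + 1) / (real d - 1)) * phipow d \<phi>"
    using phipow_id[OF d] by (simp add: pe_def)
  have e2: "exp (- (real d + 1) * A) * exp (2 * A) * exp((real d - 1) * A) = 1"
    by (simp add: exp_add[symmetric] algebra_simps)
  have r1: "\<phi> * RY d \<kappa> l lam k \<mu> A \<phi> = 2 * k * ((real d - 1) / (2 * l))\<^sup>2 * \<phi>\<^sup>2 * exp (- 2 * A)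
      + lam * (2 * ((real d + 1) / (real d - 1)) * phipow d \<phi>)"
    unfolding RY_def id[symmetric] by (simp add: algebra_simps power2_eq_square)
  have r2: "exp (- (real d + 1) * A) * (- (real d + 1)) = - (real d + 1) * exp (- (real d + 1) * A)" by simp
  have key: "(real d - 1) / 2 * \<phi> * RY d \<kappa> l lam k \<mu> A \<phi> - RA d \<kappa> l lam k \<mu> A \<phi>
      = (real d + 1) * rad_phi d \<kappa> l lam k \<mu> A \<phi>"
  proof -
    have "(real d - 1) / 2 * \<phi> * RY d \<kappa> l lam k \<mu> A \<phi> = (real d - 1) / 2 * (\<phi> * RY d \<kappa> l lam k \<mu> A \<phi>)"
      by simp
    also have "\<dots> = (real d - 1) * k * ((real d - 1) / (2 * l))\<^sup>2 * \<phi>\<^sup>2 * exp (- 2 * A)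
      + (real d + 1) * lam * phipow d \<phi>" unfolding r1 using dd l by (simp add: field_simps power2_eq_square)
    finally have h: "(real d - 1) / 2 * \<phi> * RY d \<kappa> l lam k \<mu> A \<phi> = (real d - 1) * k * ((real d - 1) / (2 * l))\<^sup>2 * \<phi>\<^sup>2 * exp (- 2 * A)
      + (real d + 1) * lam * phipow d \<phi>" .
    show ?thesis unfolding h RA_def rad_phi_def r2 using l by (simp add: algebra_simps add_divide_distrib[symmetric])
  qed
  have "PA s d \<kappa> l lam k \<mu> A \<phi> = s * exp (real d * A) * (2 * real d * q\<^sup>2 + RA d \<kappa> l lam k \<mu> A \<phi>) / (2 * q)"
    unfolding PA_def q_def[symmetric] using q0 by (simp add: field_simps power2_eq_square)
  also have "\<dots> = s * exp (real d * A) * ((real d - 1) / 2 * (2 * q\<^sup>2 + \<phi> * RY d \<kappa> l lam k \<mu> A \<phi>)) / (2 * q)"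
  proof -
    have "(real d - 1) / 2 * (2 * q\<^sup>2 + \<phi> * RY d \<kappa> l lam k \<mu> A \<phi>)
        = (real d - 1) * q\<^sup>2 + (real d - 1) / 2 * \<phi> * RY d \<kappa> l lam k \<mu> A \<phi>"
      by (simp add: field_simps)
    also have "\<dots> = 2 * real d * q\<^sup>2 + RA d \<kappa> l lam k \<mu> A \<phi>"
      using key unfolding qq by (simp add: algebra_simps)
    finally show ?thesis by (simp only:)
  qed
  also have "\<dots> = PY s d \<kappa> l lam k \<mu> A \<phi>"
    unfolding PY_def pi_phi_def q_def[symmetric] using q0 by (simp add: field_simps power2_eq_square)
  finally show ?thesis .
qed



lemma Ham_zero:
  assumes d: "d \<ge> 2" and kp: "\<kappa> > 0" and lp: "l > 0" and s: "s \<in> {-1, 1}"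
    and R1: "rad_phi d \<kappa> l lam k \<mu> A \<phi> \<ge> 0" and R2: "rad_A d k \<mu> A \<ge> 0"
  shows "Ham d \<kappa> l lam k A \<phi> (pi_A s d \<kappa> l lam k \<mu> A \<phi>) (pi_phi s d \<kappa> l lam k \<mu> A \<phi>) = 0"
proof -
  define q where "q = sqrt (rad_phi d \<kappa> l lam k \<mu> A \<phi>)"
  define w where "w = sqrt (rad_A d k \<mu> A)"
  define E where "E = exp (real d * A)"
  have qq: "q\<^sup>2 = rad_phi d \<kappa> l lam k \<mu> A \<phi>" using R1 by (simp add: q_def)
  have ww: "w\<^sup>2 = rad_A d k \<mu> A" using R2 by (simp add: w_def)
  have ss: "s\<^sup>2 = 1" using s by auto
  have EE: "exp (- real d * A) * E = 1" by (simp add: E_def exp_add[symmetric])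
  have dd: "real d - 1 > 0" "real d > 0" using d by auto
  have pp: "pi_phi s d \<kappa> l lam k \<mu> A \<phi> = s * E * q" by (simp add: pi_phi_def E_def q_def)
  have pa: "pi_A s d \<kappa> l lam k \<mu> A \<phi> - (real d - 1) / 2 * \<phi> * pi_phi s d \<kappa> l lam k \<mu> A \<phi>
     = - (real d * (real d - 1) / (\<kappa>\<^sup>2 * l)) * E * w" by (simp add: pi_A_def E_def w_def)
  have "Ham d \<kappa> l lam k A \<phi> (pi_A s d \<kappa> l lam k \<mu> A \<phi>) (pi_phi s d \<kappa> l lam k \<mu> A \<phi>)
    = 1/2 * ( exp (- real d * A) * E * (E * (s\<^sup>2 * q\<^sup>2 - \<kappa>\<^sup>2 / (real d * (real d - 1)) * (real d * (real d - 1) / (\<kappa>\<^sup>2 * l))\<^sup>2 * w\<^sup>2))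
           + E * ( real d * (real d - 1) / (\<kappa>\<^sup>2 * l\<^sup>2) - lam * phipow d \<phi>
               + real d * (real d - 1) * k / (\<kappa>\<^sup>2 * l\<^sup>2) * exp (- 2 * A)
                 * (1 - (real d - 1) * \<kappa>\<^sup>2 / (4 * real d) * \<phi>\<^sup>2)))"
    unfolding Ham_def pa unfolding pp E_def[symmetric] by (simp add: power_mult_distrib power2_eq_square algebra_simps)
  also have "\<dots> = 0"
    unfolding EE ss qq ww rad_phi_def rad_A_def using kp lp dd
    by (simp add: field_simps power2_eq_square)
  finally show ?thesis .
qed



lemma phipow_cont: "d \<ge> 2 \<Longrightarrow> continuous_on S (phipow d)"
  by (meson DERIV_isCont continuous_at_imp_continuous_on phipow_deriv)

lemma phipow_cont_comp[continuous_intros]: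
  "d \<ge> 2 \<Longrightarrow> continuous_on S f \<Longrightarrow> continuous_on S (\<lambda>x. phipow d (f x))"
  using continuous_on_compose2[OF phipow_cont[of d UNIV] _ subset_UNIV] by blast

lemma rad_phi_cont:
  "d \<ge> 2 \<Longrightarrow> continuous_on S (\<lambda>z. rad_phi d \<kappa> l lam k \<mu> (fst z) (snd z))"
  unfolding rad_phi_def by (intro continuous_intros)

lemma rad_A_cont:
  "continuous_on S (\<lambda>z. rad_A d k \<mu> (fst z))"
  unfolding rad_A_def by (intro continuous_intros)

lemma open_dom: "d \<ge> 2 \<Longrightarrow> open (dom_HJ d \<kappa> l lam k \<mu>)"
proof -
  assume d: "d \<ge> 2"
  have "dom_HJ d \<kappa> l lam k \<mu> = {z. (\<lambda>_. 0) z < rad_phi d \<kappa> l lam k \<mu> (fst z) (snd z)} \<inter> {z. (\<lambda>_. 0) z < rad_A d k \<mu> (fst z)}"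
    by (auto simp: dom_HJ_def)
  moreover have "open {z. (\<lambda>_. 0::real) z < rad_phi d \<kappa> l lam k \<mu> (fst z) (snd z)}"
    by (rule open_Collect_less) (auto intro: rad_phi_cont[OF d] continuous_intros)
  moreover have "open {z. (\<lambda>_. 0::real) z < rad_A d k \<mu> (fst z)}"
    by (rule open_Collect_less) (auto intro: rad_A_cont continuous_intros)
  ultimately show ?thesis by auto
qed

lemma pi_phi_cont:
  "d \<ge> 2 \<Longrightarrow> continuous_on S (\<lambda>z. pi_phi s d \<kappa> l lam k \<mu> (fst z) (snd z))"
  unfolding pi_phi_def by (intro continuous_intros rad_phi_cont)

lemma pi_A_cont:
  "d \<ge> 2 \<Longrightarrow> continuous_on S (\<lambda>z. pi_A s d \<kappa> l lam k \<mu> (fst z) (snd z))"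
  unfolding pi_A_def by (intro continuous_intros pi_phi_cont rad_A_cont)

lemma RA_cont: "continuous_on S (\<lambda>z. RA d \<kappa> l lam k \<mu> (fst z) (snd z))"
  unfolding RA_def by (intro continuous_intros)

lemma PA_cont:
  assumes "d \<ge> 2" "\<And>z. z \<in> S \<Longrightarrow> rad_phi d \<kappa> l lam k \<mu> (fst z) (snd z) > 0"
  shows "continuous_on S (\<lambda>z. PA s d \<kappa> l lam k \<mu> (fst z) (snd z))"
  unfolding PA_def using assms
  by (intro continuous_intros rad_phi_cont RA_cont) (auto, fastforce)

lemma mu_deriv:
  assumes d: "d \<ge> 2" and kp: "\<kappa> > 0" and lp: "l > 0" and s: "s \<in> {-1, 1}"
    and R: "rad_phi d \<kappa> l lam k \<mu> A \<phi> > 0"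
  shows "\<exists>D. D \<noteq> 0 \<and> ((\<lambda>m. pi_phi s d \<kappa> l lam k m A \<phi>) has_real_derivative D) (at \<mu>)"
proof -
  define c where "c = real d * (real d - 1) / (\<kappa>\<^sup>2 * l\<^sup>2) * exp (- (real d + 1) * A)"
  have c0: "c > 0" using d kp lp by (simp add: c_def)
  have r: "((\<lambda>m. rad_phi d \<kappa> l lam k m A \<phi>) has_real_derivative c) (at \<mu>)"
    unfolding rad_phi_def c_def using kp lp by (auto intro!: derivative_eq_intros)
  have "((\<lambda>m. pi_phi s d \<kappa> l lam k m A \<phi>) has_real_derivative
      s * exp (real d * A) * (c / (2 * sqrt (rad_phi d \<kappa> l lam k \<mu> A \<phi>)))) (at \<mu>)"
    unfolding pi_phi_def using R
    by (auto intro!: derivative_eq_intros r) (simp add: field_simps)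
  moreover have "s * exp (real d * A) * (c / (2 * sqrt (rad_phi d \<kappa> l lam k \<mu> A \<phi>))) \<noteq> 0"
    using s c0 R by auto
  ultimately show ?thesis by blast
qed



lemma cont_slice1:
  assumes "continuous_on UNIV (\<lambda>z. g (fst z) (snd z))"
  shows "continuous_on S (\<lambda>t. (g t y :: real))"
proof -
  have "continuous_on S (\<lambda>t. (\<lambda>z. g (fst z) (snd z)) (t, y))"
    by (rule continuous_on_compose2[OF assms]) (auto intro: continuous_intros)
  then show ?thesis by simp
qed

lemma cont_slice2:
  assumes "continuous_on UNIV (\<lambda>z. g (fst z) (snd z))"
  shows "continuous_on S (\<lambda>y. (g t y :: real))"
proof -
  have "continuous_on S (\<lambda>y. (\<lambda>z. g (fst z) (snd z)) (t, y))"
    by (rule continuous_on_compose2[OF assms]) (auto intro: continuous_intros)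
  then show ?thesis by simp
qed

lemma deriv_int_upper:
  fixes f :: "real \<Rightarrow> real"
  assumes "continuous_on {a..b} f" "a < x" "x < b"
  shows "((\<lambda>u. integral {a..u} f) has_real_derivative f x) (at x)"
proof -
  have "((\<lambda>u. integral {a..u} f) has_vector_derivative f x) (at x within {a..b})"
    using assms by (intro integral_has_vector_derivative) auto
  moreover have "at x within {a..b} = at x"
    using assms by (intro at_within_interior) auto
  ultimately show ?thesis by (simp add: has_real_derivative_iff_has_vector_derivative)
qed

lemma sq_box_ball:
  fixes A \<phi> a p r :: real
  assumes "r > 0" "\<bar>a - A\<bar> \<le> r" "\<bar>p - \<phi>\<bar> \<le> r"
  shows "(a, p) \<in> ball (A, \<phi>) (2 * r)"
proof -
  have "(a - A)\<^sup>2 \<le> r\<^sup>2" "(p - \<phi>)\<^sup>2 \<le> r\<^sup>2"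
    using assms by (simp_all add: abs_le_square_iff[symmetric])
  moreover have "r\<^sup>2 > 0" using assms(1) by simp
  moreover have "(2 * r)\<^sup>2 = 4 * r\<^sup>2" by (simp add: power_mult_distrib)
  ultimately have "(a - A)\<^sup>2 + (p - \<phi>)\<^sup>2 < (2 * r)\<^sup>2" by linarith
  then have "sqrt ((a - A)\<^sup>2 + (p - \<phi>)\<^sup>2) < 2 * r"
    using assms(1) by (intro real_less_lsqrt) auto
  then show ?thesis by (simp add: dist_Pair_Pair dist_real_def power2_commute)
qed



lemma potential:
  assumes d: "d \<ge> 2" and kp: "\<kappa> > 0" and lp: "l > 0"
    and P: "(A, \<phi>) \<in> dom_HJ d \<kappa> l lam k \<mu>"
  shows "\<exists>e > 0. \<exists>S :: real \<Rightarrow> real \<Rightarrow> real.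
             ball (A, \<phi>) e \<subseteq> dom_HJ d \<kappa> l lam k \<mu>
             \<and> (\<forall>a p. (a, p) \<in> ball (A, \<phi>) e \<longrightarrow>
                  ((\<lambda>x. S x p) has_real_derivative pi_A s d \<kappa> l lam k \<mu> a p) (at a)
                \<and> ((\<lambda>y. S a y) has_real_derivative pi_phi s d \<kappa> l lam k \<mu> a p) (at p))"
proof -
  let ?D = "dom_HJ d \<kappa> l lam k \<mu>"
  obtain r0 where r0: "r0 > 0" "ball (A, \<phi>) r0 \<subseteq> ?D"
    using open_contains_ball_eq[OF open_dom[OF d]] P by blast
  define r where "r = r0 / 2"
  have r: "r > 0" "2 * r = r0" using r0 by (auto simp: r_def)
  define A0 where "A0 = A - r"
  define A1 where "A1 = A + r"
  define p0 where "p0 = \<phi> - r"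
  define p1 where "p1 = \<phi> + r"
  have Q: "(a, p) \<in> ?D" if "A0 \<le> a" "a \<le> A1" "p0 \<le> p" "p \<le> p1" for a p
  proof -
    have "(a, p) \<in> ball (A, \<phi>) (2 * r)"
      using that r by (intro sq_box_ball) (auto simp: A0_def A1_def p0_def p1_def)
    then show ?thesis using r0 r by auto
  qed
  have QR: "rad_phi d \<kappa> l lam k \<mu> a p > 0" if "A0 \<le> a" "a \<le> A1" "p0 \<le> p" "p \<le> p1" for a p
    using Q[OF that] by (simp add: dom_HJ_def)
  have cA: "continuous_on X (\<lambda>t. pi_A s d \<kappa> l lam k \<mu> t y)" for X y
    by (rule cont_slice1[OF pi_A_cont[OF d]])
  have cA2: "continuous_on X (\<lambda>y. pi_A s d \<kappa> l lam k \<mu> t y)" for X t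
    by (rule cont_slice2[OF pi_A_cont[OF d]])
  have cP: "continuous_on X (\<lambda>y. pi_phi s d \<kappa> l lam k \<mu> t y)" for X t
    by (rule cont_slice2[OF pi_phi_cont[OF d]])
  define F where "F a = integral {A0..a} (\<lambda>t. pi_A s d \<kappa> l lam k \<mu> t p0)" for a
  define G where "G a p = integral {p0..p} (\<lambda>y. pi_phi s d \<kappa> l lam k \<mu> a y)" for a p
  define S where "S a p = F a + G a p" for a p
  have inb: "A0 < a \<and> a < A1 \<and> p0 < p \<and> p < p1" if "(a, p) \<in> ball (A, \<phi>) r" for a p
  proof -
    have h: "dist (a, p) (A, \<phi>) < r" using that by (simp add: dist_commute)
    have "dist a A < r" using dist_fst_le[of "(a,p)" "(A,\<phi>)"] h by simp
    moreover have "dist p \<phi> < r" using dist_snd_le[of "(a,p)" "(A,\<phi>)"] h by simp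
    ultimately have "\<bar>a - A\<bar> < r" "\<bar>p - \<phi>\<bar> < r" by (simp_all add: dist_real_def)
    then show ?thesis unfolding A0_def A1_def p0_def p1_def by linarith
  qed
  have main: "((\<lambda>x. S x p) has_real_derivative pi_A s d \<kappa> l lam k \<mu> a p) (at a)
          \<and> ((\<lambda>y. S a y) has_real_derivative pi_phi s d \<kappa> l lam k \<mu> a p) (at p)"
    if ap: "A0 < a" "a < A1" "p0 < p" "p < p1" for a p
  proof
    have dF: "(F has_real_derivative pi_A s d \<kappa> l lam k \<mu> a p0) (at a)"
      unfolding F_def using ap by (intro deriv_int_upper cA) auto
    have dG2: "((\<lambda>y. G a y) has_real_derivative pi_phi s d \<kappa> l lam k \<mu> a p) (at p)"
      unfolding G_def using ap by (intro deriv_int_upper[where b=p1] cP) auto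
    show "((\<lambda>y. S a y) has_real_derivative pi_phi s d \<kappa> l lam k \<mu> a p) (at p)"
      unfolding S_def using dG2 by (auto intro!: derivative_eq_intros)
    let ?U = "{A0<..<A1}"
    have "((\<lambda>x. integral (cbox p0 p) (\<lambda>y. pi_phi s d \<kappa> l lam k \<mu> x y)) has_field_derivative
        integral (cbox p0 p) (\<lambda>y. PA s d \<kappa> l lam k \<mu> a y)) (at a within ?U)"
    proof (rule leibniz_rule_field_derivative)
      fix x t assume xt: "x \<in> ?U" "t \<in> cbox p0 p"
      then have "rad_phi d \<kappa> l lam k \<mu> x t > 0" using ap by (intro QR) auto
      then show "((\<lambda>x. pi_phi s d \<kappa> l lam k \<mu> x t) has_field_derivative PA s d \<kappa> l lam k \<mu> x t) (at x within ?U)"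
        using kp lp by (intro has_field_derivative_at_within[OF pi_phi_dA]) auto
    next
      fix x assume "x \<in> ?U"
      show "(\<lambda>y. pi_phi s d \<kappa> l lam k \<mu> x y) integrable_on cbox p0 p"
        by (intro integrable_continuous cP)
    next
      have "continuous_on (?U \<times> cbox p0 p) (\<lambda>z. PA s d \<kappa> l lam k \<mu> (fst z) (snd z))"
        using ap by (intro PA_cont d) (auto intro!: QR)
      then show "continuous_on (?U \<times> cbox p0 p) (\<lambda>(x, t). PA s d \<kappa> l lam k \<mu> x t)"
        by (simp add: case_prod_beta)
    next
      show "a \<in> ?U" using ap by simp
    next
      show "convex ?U" by (rule convex_real_interval)
    qed
    note L = this
    have dG1: "((\<lambda>x. G x p) has_real_derivative integral {p0..p} (\<lambda>y. PA s d \<kappa> l lam k \<mu> a y)) (at a)"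
    proof -
      have aU: "a \<in> ?U" using ap by simp
      show ?thesis unfolding G_def
        using L[unfolded cbox_interval at_within_open[OF aU open_greaterThanLessThan]] .
    qed
    have "(PY s d \<kappa> l lam k \<mu> a has_integral (pi_A s d \<kappa> l lam k \<mu> a p - pi_A s d \<kappa> l lam k \<mu> a p0)) {p0..p}"
    proof (rule fundamental_theorem_of_calculus)
      show "p0 \<le> p" using ap by simp
      fix y assume "y \<in> {p0..p}"
      then have "rad_phi d \<kappa> l lam k \<mu> a y > 0" using ap by (intro QR) auto
      then have "((\<lambda>y. pi_A s d \<kappa> l lam k \<mu> a y) has_real_derivative PY s d \<kappa> l lam k \<mu> a y) (at y within {p0..p})"
        using d by (intro has_field_derivative_at_within[OF pi_A_dphi]) auto
      then show "((\<lambda>y. pi_A s d \<kappa> l lam k \<mu> a y) has_vector_derivative PY s d \<kappa> l lam k \<mu> a y) (at y within {p0..p})"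
        by (simp add: has_real_derivative_iff_has_vector_derivative)
    qed
    then have "integral {p0..p} (PY s d \<kappa> l lam k \<mu> a) = pi_A s d \<kappa> l lam k \<mu> a p - pi_A s d \<kappa> l lam k \<mu> a p0"
      by (rule integral_unique)
    moreover have "integral {p0..p} (\<lambda>y. PA s d \<kappa> l lam k \<mu> a y) = integral {p0..p} (PY s d \<kappa> l lam k \<mu> a)"
    proof (rule integral_cong)
      fix y assume "y \<in> {p0..p}"
      then have "rad_phi d \<kappa> l lam k \<mu> a y > 0" using ap by (intro QR) auto
      then show "PA s d \<kappa> l lam k \<mu> a y = PY s d \<kappa> l lam k \<mu> a y"
        using d lp by (intro PA_PY) auto
    qed
    ultimately have dG1': "((\<lambda>x. G x p) has_real_derivative pi_A s d \<kappa> l lam k \<mu> a p - pi_A s d \<kappa> l lam k \<mu> a p0) (at a)"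
      using dG1 by simp
    show "((\<lambda>x. S x p) has_real_derivative pi_A s d \<kappa> l lam k \<mu> a p) (at a)"
      unfolding S_def using DERIV_add[OF dF dG1'] by simp
  qed
  show ?thesis
  proof (intro exI conjI allI impI)
    show "r > 0" by (rule r)
    have "ball (A, \<phi>) r \<subseteq> ball (A, \<phi>) r0" using r by (intro subset_ball) auto
    then show "ball (A, \<phi>) r \<subseteq> ?D" using r0 by blast
  next
    fix a p assume "(a, p) \<in> ball (A, \<phi>) r"
    then have "A0 < a" "a < A1" "p0 < p" "p < p1" using inb by auto
    from main[OF this] show "((\<lambda>x. S x p) has_real_derivative pi_A s d \<kappa> l lam k \<mu> a p) (at a)"
       "((\<lambda>y. S a y) has_real_derivative pi_phi s d \<kappa> l lam k \<mu> a p) (at p)" by auto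
  qed
qed

theorem mainTheorem9:
  fixes d :: nat and \<kappa> l lam k \<mu> s :: real
  assumes "d \<ge> 2" and "\<kappa> > 0" and "l > 0"
    and "k \<in> {-1, 0, 1}" and "s \<in> {-1, 1}"
  shows
    "open (dom_HJ d \<kappa> l lam k \<mu>)
     \<and> (\<forall>A \<phi>. (A, \<phi>) \<in> dom_HJ d \<kappa> l lam k \<mu> \<longrightarrow>
          Ham d \<kappa> l lam k A \<phi> (pi_A s d \<kappa> l lam k \<mu> A \<phi>) (pi_phi s d \<kappa> l lam k \<mu> A \<phi>) = 0)
     \<and> (\<forall>A \<phi>. (A, \<phi>) \<in> dom_HJ d \<kappa> l lam k \<mu> \<longrightarrow>
          (\<exists>D. ((\<lambda>p. pi_A s d \<kappa> l lam k \<mu> A p) has_real_derivative D) (at \<phi>)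
             \<and> ((\<lambda>a. pi_phi s d \<kappa> l lam k \<mu> a \<phi>) has_real_derivative D) (at A)))
     \<and> (\<forall>A \<phi>. (A, \<phi>) \<in> dom_HJ d \<kappa> l lam k \<mu> \<longrightarrow>
          (\<exists>e > 0. \<exists>S :: real \<Rightarrow> real \<Rightarrow> real.
             ball (A, \<phi>) e \<subseteq> dom_HJ d \<kappa> l lam k \<mu>
             \<and> (\<forall>a p. (a, p) \<in> ball (A, \<phi>) e \<longrightarrow>
                  ((\<lambda>x. S x p) has_real_derivative pi_A s d \<kappa> l lam k \<mu> a p) (at a)
                \<and> ((\<lambda>y. S a y) has_real_derivative pi_phi s d \<kappa> l lam k \<mu> a p) (at p)
                \<and> Ham d \<kappa> l lam k a p (pi_A s d \<kappa> l lam k \<mu> a p) (pi_phi s d \<kappa> l lam k \<mu> a p) = 0)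
             \<and> (\<exists>D. D \<noteq> 0 \<and> ((\<lambda>m. pi_phi s d \<kappa> l lam k m A \<phi>) has_real_derivative D) (at \<mu>))))"
proof -
  note d = assms(1) and kp = assms(2) and lp = assms(3) and s = assms(5)
  let ?D = "dom_HJ d \<kappa> l lam k \<mu>"
  have H: "Ham d \<kappa> l lam k a p (pi_A s d \<kappa> l lam k \<mu> a p) (pi_phi s d \<kappa> l lam k \<mu> a p) = 0"
    if "(a, p) \<in> ?D" for a p
    using that by (intro Ham_zero[OF d kp lp s]) (auto simp: dom_HJ_def)
  show ?thesis
  proof (intro conjI allI impI)
    show "open ?D" by (rule open_dom[OF d])
  next
    fix A \<phi> assume "(A, \<phi>) \<in> ?D"
    then show "Ham d \<kappa> l lam k A \<phi> (pi_A s d \<kappa> l lam k \<mu> A \<phi>) (pi_phi s d \<kappa> l lam k \<mu> A \<phi>) = 0"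
      by (rule H)
  next
    fix A \<phi> assume P: "(A, \<phi>) \<in> ?D"
    then have R: "rad_phi d \<kappa> l lam k \<mu> A \<phi> > 0" by (simp add: dom_HJ_def)
    have e: "PA s d \<kappa> l lam k \<mu> A \<phi> = PY s d \<kappa> l lam k \<mu> A \<phi>"
      using d R lp by (intro PA_PY) auto
    show "\<exists>D. ((\<lambda>p. pi_A s d \<kappa> l lam k \<mu> A p) has_real_derivative D) (at \<phi>)
             \<and> ((\<lambda>a. pi_phi s d \<kappa> l lam k \<mu> a \<phi>) has_real_derivative D) (at A)"
      using pi_A_dphi[OF d R, of s] pi_phi_dA[of \<kappa> l d lam k \<mu> A \<phi> s] kp lp R e by auto
  next
    fix A \<phi> assume P: "(A, \<phi>) \<in> ?D"
    then have R: "rad_phi d \<kappa> l lam k \<mu> A \<phi> > 0" by (simp add: dom_HJ_def)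
    obtain e S where eS: "e > 0" "ball (A, \<phi>) e \<subseteq> ?D"
      "\<forall>a p. (a, p) \<in> ball (A, \<phi>) e \<longrightarrow>
                  ((\<lambda>x. S x p) has_real_derivative pi_A s d \<kappa> l lam k \<mu> a p) (at a)
                \<and> ((\<lambda>y. S a y) has_real_derivative pi_phi s d \<kappa> l lam k \<mu> a p) (at p)"
      using potential[OF d kp lp P, of s] by blast
    have M: "\<exists>D. D \<noteq> 0 \<and> ((\<lambda>m. pi_phi s d \<kappa> l lam k m A \<phi>) has_real_derivative D) (at \<mu>)"
      by (rule mu_deriv[OF d kp lp s R])
    show "\<exists>e > 0. \<exists>S :: real \<Rightarrow> real \<Rightarrow> real.
             ball (A, \<phi>) e \<subseteq> ?D
             \<and> (\<forall>a p. (a, p) \<in> ball (A, \<phi>) e \<longrightarrow>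
                  ((\<lambda>x. S x p) has_real_derivative pi_A s d \<kappa> l lam k \<mu> a p) (at a)
                \<and> ((\<lambda>y. S a y) has_real_derivative pi_phi s d \<kappa> l lam k \<mu> a p) (at p)
                \<and> Ham d \<kappa> l lam k a p (pi_A s d \<kappa> l lam k \<mu> a p) (pi_phi s d \<kappa> l lam k \<mu> a p) = 0)
             \<and> (\<exists>D. D \<noteq> 0 \<and> ((\<lambda>m. pi_phi s d \<kappa> l lam k m A \<phi>) has_real_derivative D) (at \<mu>))"
    proof (rule exI[of _ e], rule conjI[OF eS(1)], rule exI[of _ S], intro conjI allI impI)
      show "ball (A, \<phi>) e \<subseteq> ?D" by (rule eS(2))
      show "\<exists>D. D \<noteq> 0 \<and> ((\<lambda>m. pi_phi s d \<kappa> l lam k m A \<phi>) has_real_derivative D) (at \<mu>)" by (rule M)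
    next
      fix a p assume ap: "(a, p) \<in> ball (A, \<phi>) e"
      then show "((\<lambda>x. S x p) has_real_derivative pi_A s d \<kappa> l lam k \<mu> a p) (at a)"
        using eS(3) by blast
      show "((\<lambda>y. S a y) has_real_derivative pi_phi s d \<kappa> l lam k \<mu> a p) (at p)"
        using eS(3) ap by blast
      show "Ham d \<kappa> l lam k a p (pi_A s d \<kappa> l lam k \<mu> a p) (pi_phi s d \<kappa> l lam k \<mu> a p) = 0"
        using eS(2) ap by (intro H) blast
    qed
  qed
qed

end
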